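(* Let $n\ge 3$ and let $w(t)$ be the solution of \[ w''+\frac{n-1}{t}w'+e^{w}=0,\qquad w(0)=0,\quad w'(0)=0 \qquad (t>0). \] Set $\lambda(t)=t^2e^{w(t)}$. If $t_n>0$ satisfies $\lambda'(t_n)=0$ (that is, the corresponding solution of the Gelfand problem is singular), then $\lambda''(t_n)\neq 0$.
   Context: The Gelfand problem is $\Delta u+\lambda e^u=0$ for $|x|<1$ in $\mathbb{R}^n$, with $u=0$ on $|x|=1$. Its solutions are radial, $u=u(|x|)$. The solution $w$ above is defined for all $t>0$. The full solution set of the Gelfand problem is the curve $t\mapsto(\lambda(t),u_t)$, $t\in(0,\infty)$, where $u_t(x)=w(t|x|)-w(t)$ and $\lambda(t)=t^2e^{w(t)}$. *)

theory Defs
  imports "HOL-Analysis.Analysis"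
begin

end

theory Submission
  imports Defs
begin

lemma exp_diff_bound:
  fixes x y :: real
  shows "\<bar>exp x - exp y\<bar> \<le> (exp x + exp y) * \<bar>x - y\<bar>"
proof -
  have key: "exp v - exp u \<le> exp v * (v - u)" if "u \<le> v" for u v :: real
  proof -
    have "1 - (v - u) \<le> exp (u - v)" using exp_ge_add_one_self[of "u - v"] by linarith
    hence "exp v * (1 - (v - u)) \<le> exp v * exp (u - v)" by simp
    also have "\<dots> = exp u" by (simp add: exp_diff)
    finally show ?thesis by (simp add: algebra_simps)
  qed
  show ?thesis
  proof (cases "x \<le> y")
    case True
    from key[OF True] have "exp y - exp x \<le> exp y * (y - x)" .
    moreover have "exp x \<le> exp y" using True by simp
    ultimately show ?thesis using True
      by (smt (verit, best) exp_gt_zero mult_right_mono)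
  next
    case False
    from key[of y x] False have "exp x - exp y \<le> exp x * (x - y)" by simp
    moreover have "exp y \<le> exp x" using False by simp
    ultimately show ?thesis using False
      by (smt (verit, best) exp_gt_zero mult_right_mono)
  qed
qed

theorem theorem5p1:
  fixes n :: nat and w w' w'' :: "real \<Rightarrow> real" and tn :: real
  assumes n3: "n \<ge> 3"
    and cont0: "continuous_on {0..} w"
    and init0: "w 0 = 0"
    and dinit0: "(w has_real_derivative 0) (at 0 within {0..})"
    and d1: "\<And>t. t > 0 \<Longrightarrow> (w has_real_derivative w' t) (at t)"
    and d2: "\<And>t. t > 0 \<Longrightarrow> (w' has_real_derivative w'' t) (at t)"
    and ode: "\<And>t. t > 0 \<Longrightarrow> w'' t + (real n - 1) / t * w' t + exp (w t) = 0"
    and tpos: "tn > 0"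
    and crit: "deriv (\<lambda>t. t\<^sup>2 * exp (w t)) tn = 0"
  shows "deriv (deriv (\<lambda>t. t\<^sup>2 * exp (w t))) tn \<noteq> 0"
proof
  assume H: "deriv (deriv (\<lambda>t. t\<^sup>2 * exp (w t))) tn = 0"
  define L1 where "L1 = (\<lambda>t. 2*t*exp (w t) + t\<^sup>2*(exp (w t) * w' t))"
  have dl: "((\<lambda>t. t\<^sup>2 * exp (w t)) has_real_derivative L1 t) (at t)" if "t > 0" for t
    unfolding L1_def using d1[OF that]
    by (auto intro!: derivative_eq_intros)
  have dL: "deriv (\<lambda>t. t\<^sup>2 * exp (w t)) t = L1 t" if "t > 0" for t
    using dl[OF that] by (rule DERIV_imp_deriv)
  define L2 where "L2 = 2*exp (w tn) + 2*tn*(exp (w tn) * w' tn) + (2*tn*(exp (w tn)*w' tn) + tn\<^sup>2*(exp (w tn) * w' tn * w' tn + exp (w tn) * w'' tn))"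
  have dL1: "(L1 has_real_derivative L2) (at tn)"
    unfolding L1_def L2_def using d1[OF tpos] d2[OF tpos]
    by (auto intro!: derivative_eq_intros simp: algebra_simps)
  have ev: "eventually (\<lambda>t. deriv (\<lambda>t. t\<^sup>2 * exp (w t)) t = L1 t) (nhds tn)"
    using eventually_nhds_in_open[of "{0<..}" tn] tpos
    by (auto elim!: eventually_mono intro: dL)
  have "((deriv (\<lambda>t. t\<^sup>2 * exp (w t))) has_real_derivative L2) (at tn)"
    using DERIV_cong_ev[OF refl ev refl] dL1 by simp
  hence L20: "L2 = 0" using H DERIV_imp_deriv by fastforce
  have L10: "L1 tn = 0" using crit dL[OF tpos] by simp
  define W where "W = w tn"
  define P where "P = w' tn"
  define Q where "Q = w'' tn"
  have Epos: "exp W > 0" by simp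
  have "exp W * tn * (2 + tn * P) = 0" using L10 unfolding L1_def W_def P_def
    by (simp add: algebra_simps power2_eq_square)
  hence tP: "tn * P = -2" using tpos by simp
  have "exp W * (2 + 4 * (tn*P) + (tn*P)^2 + tn\<^sup>2 * Q) = 0" using L20 unfolding L2_def W_def P_def Q_def
    by (simp add: algebra_simps power2_eq_square)
  hence "2 + 4 * (tn*P) + (tn*P)^2 + tn\<^sup>2 * Q = 0" by simp
  hence tQ: "tn\<^sup>2 * Q = 2" using tP by simp
  have "Q + (real n - 1) / tn * P + exp W = 0" using ode[OF tpos] unfolding W_def P_def Q_def .
  hence "tn\<^sup>2 * (Q + (real n - 1) / tn * P + exp W) = 0" by simp
  moreover have "tn\<^sup>2 * (Q + (real n - 1) / tn * P + exp W) = tn\<^sup>2 * Q + (real n - 1) * (tn * P) + tn\<^sup>2 * exp W"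
    using tpos by (simp add: field_simps power2_eq_square)
  ultimately have "tn\<^sup>2 * Q + (real n - 1) * (tn * P) + tn\<^sup>2 * exp W = 0" by linarith
  moreover have "(real n - 1) * (tn*P) = -2*(real n - 1)" using tP by simp
  ultimately have crit2: "tn\<^sup>2 * exp W = 2 * (real n - 2)" using tQ by (smt (verit))
  define c where "c = 2 * (real n - 2)"
  have cpos: "c > 0" using n3 unfolding c_def by simp
  define ws where "ws = (\<lambda>t. ln c - 2 * ln t)"
  have "ln (tn\<^sup>2 * exp W) = ln c" using crit2 unfolding c_def by simp
  hence "2 * ln tn + W = ln c" using tpos by (simp add: ln_mult ln_realpow)
  hence wtn: "w tn = ws tn" unfolding ws_def W_def by simp
  have w'tn: "w' tn = -2/tn" using tP tpos unfolding P_def by (simp add: field_simps)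
  have expws: "exp (ws t) = c / t\<^sup>2" if "t > 0" for t
  proof -
    have "exp (2 * ln t) = exp (ln t) * exp (ln t)" by (simp only: mult_2 exp_add)
    also have "\<dots> = t\<^sup>2" using that by (simp add: power2_eq_square)
    finally have "exp (2 * ln t) = t\<^sup>2" .
    thus ?thesis using that cpos unfolding ws_def by (simp add: exp_diff)
  qed
  have "compact (w ` {0..tn})"
    by (rule compact_continuous_image) (rule continuous_on_subset[OF cont0], auto)
  then obtain B where B: "\<And>t. t \<in> {0..tn} \<Longrightarrow> \<bar>w t\<bar> \<le> B"
    using compact_imp_bounded bounded_iff by (metis image_eqI real_norm_def)
  have eq: "w a = ws a" if a: "0 < a" "a \<le> tn" for a
  proof -
    define d where "d = (\<lambda>t. w t - ws t)"
    define e where "e = (\<lambda>t. w' t + 2 / t)"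
    define g where "g = (\<lambda>t. (d t)\<^sup>2 + (e t)\<^sup>2)"
    define G where "G = (\<lambda>t. 2 * d t * e t + 2 * e t * (w'' t - 2 / t\<^sup>2))"
    define M where "M = exp B + c / a\<^sup>2"
    define C where "C = 1 + 2 * (real n - 1) / a + M"
    have hd: "(d has_real_derivative e t) (at t)" if "t > 0" for t
    proof -
      have "((\<lambda>t. ln c - 2 * ln t) has_real_derivative (-(2/t))) (at t)"
        using that by (auto intro!: derivative_eq_intros)
      from DERIV_diff[OF d1[OF that] this] show ?thesis
        unfolding d_def e_def ws_def by simp
    qed
    have he: "(e has_real_derivative (w'' t - 2 / t\<^sup>2)) (at t)" if "t > 0" for t
    proof -
      have "((\<lambda>t. 2 / t) has_real_derivative (- 2 / t\<^sup>2)) (at t)"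
        using that by (auto intro!: derivative_eq_intros simp: power2_eq_square)
      from DERIV_add[OF d2[OF that] this] show ?thesis
        unfolding e_def by simp
    qed
    have hg: "(g has_real_derivative G t) (at t)" if "t > 0" for t
      unfolding g_def G_def
      using hd[OF that] he[OF that]
      by (auto intro!: derivative_eq_intros simp: algebra_simps)
    have Gb: "G t \<ge> - C * g t" if t: "a \<le> t" "t \<le> tn" for t
    proof -
      have tp: "t > 0" using t a by simp
      define D where "D = d t"
      define E where "E = e t"
      define X where "X = exp (w t) - exp (ws t)"
      have id: "w'' t - 2 / t\<^sup>2 = - ((real n - 1) / t * E) - X"
      proof -
        have wdd: "w'' t = -((real n - 1)/t * w' t) - exp (w t)" using ode[OF tp] by linarith
        show ?thesis unfolding E_def X_def e_def expws[OF tp] c_def wdd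
          using tp by (simp add: field_simps power2_eq_square)
      qed
      have GG: "G t = 2 * D * E - 2 * ((real n - 1) / t * E\<^sup>2) - 2 * E * X"
        unfolding G_def D_def[symmetric] E_def[symmetric] id by (simp add: algebra_simps power2_eq_square)
      have gg: "g t = D\<^sup>2 + E\<^sup>2" unfolding g_def D_def E_def ..
      have i1: "2 * D * E \<ge> - (D\<^sup>2 + E\<^sup>2)"
        using sum_squares_ge_zero[of "D + E" 0] by (simp add: power2_eq_square algebra_simps)
      have n1: "real n - 1 \<ge> 0" using n3 by simp
      have "(real n - 1) / t \<le> (real n - 1) / a"
        using n1 t a by (simp add: frac_le)
      hence i2: "(real n - 1) / t * E\<^sup>2 \<le> (real n - 1) / a * E\<^sup>2"
        by (rule mult_right_mono) simp
      have i2': "(real n - 1) / a * E\<^sup>2 \<le> (real n - 1) / a * (D\<^sup>2 + E\<^sup>2)"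
        using n1 a by (intro mult_left_mono) auto
      have ew: "exp (w t) \<le> exp B" using B[of t] t a by simp
      have "exp (ws t) = c / t\<^sup>2" using expws[OF tp] .
      also have "\<dots> \<le> c / a\<^sup>2" using cpos t a
        by (simp add: frac_le power_mono)
      finally have "exp (w t) + exp (ws t) \<le> M" unfolding M_def using ew by linarith
      hence "\<bar>X\<bar> \<le> M * \<bar>D\<bar>" unfolding X_def D_def d_def
        using exp_diff_bound[of "w t" "ws t"]
        by (smt (verit, best) abs_ge_zero mult_right_mono)
      hence "\<bar>2 * E * X\<bar> \<le> 2 * \<bar>E\<bar> * (M * \<bar>D\<bar>)"
        by (simp add: abs_mult mult_left_mono)
      also have "\<dots> = M * (2 * \<bar>E\<bar> * \<bar>D\<bar>)" by simp
      also have "\<dots> \<le> M * (D\<^sup>2 + E\<^sup>2)"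
      proof -
        have "2 * \<bar>E\<bar> * \<bar>D\<bar> \<le> D\<^sup>2 + E\<^sup>2"
          using sum_squares_ge_zero[of "\<bar>D\<bar> - \<bar>E\<bar>" 0] by (simp add: power2_eq_square algebra_simps)
        moreover have "M \<ge> 0" unfolding M_def using cpos by simp
        ultimately show ?thesis by (simp add: mult_left_mono)
      qed
      finally have i3: "\<bar>2 * E * X\<bar> \<le> M * (D\<^sup>2 + E\<^sup>2)" .
      have "C * g t = (D\<^sup>2 + E\<^sup>2) + 2 * ((real n - 1) / a * (D\<^sup>2 + E\<^sup>2)) + M * (D\<^sup>2 + E\<^sup>2)"
        unfolding C_def gg using a by (simp add: field_simps)
      thus ?thesis using GG i1 i2 i2' i3 by linarith
    qed
    define h where "h = (\<lambda>t. g t * exp (C * t))"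
    have "h a \<le> h tn"
    proof (rule DERIV_nonneg_imp_nondecreasing[OF a(2)])
      fix x assume x: "a \<le> x" "x \<le> tn"
      have xp: "x > 0" using x a by simp
      have "(h has_real_derivative (G x * exp (C * x) + g x * (exp (C * x) * C))) (at x)"
        unfolding h_def using hg[OF xp] by (auto intro!: derivative_eq_intros)
      moreover have "G x * exp (C * x) + g x * (exp (C * x) * C) = (G x + C * g x) * exp (C * x)"
        by (simp add: algebra_simps)
      moreover have "G x + C * g x \<ge> 0" using Gb[OF x] by simp
      ultimately show "\<exists>y. (h has_real_derivative y) (at x) \<and> y \<ge> 0" by auto
    qed
    moreover have "g tn = 0" unfolding g_def d_def e_def using wtn w'tn by simp
    ultimately have "g a * exp (C * a) \<le> 0" unfolding h_def by simp
    moreover have "exp (C * a) > 0" by simp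
    ultimately have "g a \<le> 0" by (meson not_le mult_pos_pos)
    moreover have "(d a)\<^sup>2 \<ge> 0" "(e a)\<^sup>2 \<ge> 0" by simp_all
    ultimately have "(d a)\<^sup>2 = 0" unfolding g_def by linarith
    hence "d a = 0" by simp
    thus ?thesis unfolding d_def by simp
  qed
  define K where "K = - \<bar>ln c\<bar> - \<bar>B\<bar> - 2"
  define t0 where "t0 = min tn (exp K)"
  have t0p: "t0 > 0" and t0le: "t0 \<le> tn" using tpos unfolding t0_def by auto
  have "t0 \<le> exp K" unfolding t0_def by simp
  hence "ln t0 \<le> ln (exp K)" using t0p by (subst ln_le_cancel_iff) auto
  hence lt: "ln t0 \<le> K" by simp
  have "ln c \<ge> - \<bar>ln c\<bar>" "B \<le> \<bar>B\<bar>" by auto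
  hence "ws t0 \<ge> B + 2" using lt unfolding ws_def K_def by linarith
  moreover have "w t0 \<le> B" using B[of t0] t0p t0le by simp
  moreover have "w t0 = ws t0" using eq t0p t0le by simp
  ultimately show False by simp
qed

end
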